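(* There is an absolute constant $c>0$ such that for every finite simple graph $G=(V,E)$ with maximum degree $d\ge 1$, there is an injective placement of the vertices of $G$ on the unit sphere in $\mathbb{R}^3$ such that, drawing each edge as the straight-line segment between its endpoints, any two distinct edges sharing a common endpoint form an angle of at least $c/d$ at that endpoint (i.e., the 3D straight-line drawing has angular resolution $\Omega(1/d)$).
   Context: The angle between two segments sharing an endpoint is the angle in $[0,\pi]$ between the corresponding rays from that endpoint. The angular resolution of a drawing is the minimum, over all vertices $v$ and pairs of distinct edges incident to $v$, of the angle they form at $v$. *)

theory Defs
  imports "HOL-Analysis.Analysis"
begin

definition vec_angle :: "real^3 \<Rightarrow> real^3 \<Rightarrow> real" where
  "vec_angle x y = arccos ((x \<bullet> y) / (norm x * norm y))"

definition simple_graph :: "'a set \<Rightarrow> ('a \<Rightarrow> 'a \<Rightarrow> bool) \<Rightarrow> bool" where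
  "simple_graph V E \<longleftrightarrow> finite V \<and> (\<forall>u v. E u v \<longrightarrow> u \<in> V \<and> v \<in> V)
     \<and> (\<forall>u v. E u v \<longrightarrow> E v u) \<and> (\<forall>v. \<not> E v v)"

definition degree :: "'a set \<Rightarrow> ('a \<Rightarrow> 'a \<Rightarrow> bool) \<Rightarrow> 'a \<Rightarrow> nat" where
  "degree V E v = card {u \<in> V. E v u}"

definition max_degree :: "'a set \<Rightarrow> ('a \<Rightarrow> 'a \<Rightarrow> bool) \<Rightarrow> nat" where
  "max_degree V E = Max (insert 0 (degree V E ` V))"

end

theory Submission imports Defs begin
lemma gram_det:
  fixes u v w :: "real^3"
  shows "(u\<bullet>u)*(v\<bullet>v)*(w\<bullet>w) + 2*(u\<bullet>v)*(v\<bullet>w)*(u\<bullet>w) - (u\<bullet>u)*(v\<bullet>w)^2 - (v\<bullet>v)*(u\<bullet>w)^2 - (w\<bullet>w)*(u\<bullet>v)^2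
     = (u$1*(v$2*w$3 - v$3*w$2) - u$2*(v$1*w$3 - v$3*w$1) + u$3*(v$1*w$2 - v$2*w$1))^2"
  unfolding inner_vec_def sum_3 by (simp add: power2_eq_square algebra_simps)

lemma cos_lb: "1 - x^2/2 \<le> cos (x::real)"
proof -
  have "cos x = 1 - 2 * (sin (x/2))^2"
    using cos_double_sin[of "x/2"] by simp
  moreover have "(sin (x/2))^2 \<le> (x/2)^2"
    using abs_sin_x_le_abs_x[of "x/2"]  by (metis abs_ge_zero power2_abs power_mono)
  ultimately show ?thesis by (simp add: power_divide)
qed

lemma angle_lb:
  fixes u v w :: "real^3"
  assumes nu: "norm u = 1" and nv: "norm v = 1" and nw: "norm w = 1" and uv: "u \<noteq> v" and wv: "w \<noteq> v"
  shows "norm (u - w) / 2 \<le> vec_angle (u - v) (w - v)"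
proof -
  have uu: "u\<bullet>u = 1" using nu by (simp add: norm_eq_1)
  have vv: "v\<bullet>v = 1" using nv by (simp add: norm_eq_1)
  have ww: "w\<bullet>w = 1" using nw by (simp add: norm_eq_1)
  define x where "x = u\<bullet>v"
  define y where "y = v\<bullet>w"
  define z where "z = u\<bullet>w"
  have G: "1 + 2*x*y*z - y^2 - z^2 - x^2 \<ge> 0"
    using gram_det[of u v w] unfolding uu vv ww x_def y_def z_def by simp
  define a where "a = u - v"
  define b where "b = w - v"
  have A: "a\<bullet>a = 2 - 2*x" unfolding a_def x_def using uu vv
    by (simp add: inner_diff_left inner_diff_right inner_commute)
  have B: "b\<bullet>b = 2 - 2*y" unfolding b_def y_def using ww vv
    by (simp add: inner_diff_left inner_diff_right inner_commute)
  have P: "a\<bullet>b = z - x - y + 1" unfolding a_def b_def x_def y_def z_def using vv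
    by (simp add: inner_diff_left inner_diff_right inner_commute)
  define s where "s = norm (u - w)"
  have S: "s^2 = 2 - 2*z" unfolding s_def z_def power2_norm_eq_inner using uu ww
    by (simp add: inner_diff_left inner_diff_right inner_commute)
  have key: "4*((a\<bullet>a)*(b\<bullet>b) - (a\<bullet>b)^2) - ((a\<bullet>a)*(b\<bullet>b))*(s^2) = 4*(1 + 2*x*y*z - y^2 - z^2 - x^2)"
    unfolding A B P S by (simp add: power2_eq_square algebra_simps)
  have na: "norm a > 0" using uv a_def by simp
  have nb: "norm b > 0" using wv b_def by simp
  define C where "C = (a\<bullet>b) / (norm a * norm b)"
  have aa: "a\<bullet>a = (norm a)^2" by (simp add: power2_norm_eq_inner)
  have bb: "b\<bullet>b = (norm b)^2" by (simp add: power2_norm_eq_inner)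
  have AB: "(a\<bullet>b)^2 \<le> (norm a * norm b)^2 * (1 - s^2/4)"
    using key G unfolding aa bb by (simp add: power_mult_distrib algebra_simps)
  have C2: "C^2 \<le> 1 - s^2/4"
    unfolding C_def using AB na nb by (simp add: power_divide divide_le_eq mult.commute)
  have Cabs: "\<bar>C\<bar> \<le> 1" unfolding C_def using Cauchy_Schwarz_ineq2[of a b] na nb
    by (simp add: divide_le_eq abs_divide)
  have s0: "0 \<le> s" unfolding s_def by simp
  have s2: "s \<le> 2" unfolding s_def using norm_triangle_ineq4[of u w] nu nw by simp
  have Cle: "C \<le> 1 - s^2/8"
  proof (cases "C \<le> 0")
    case True
    have "s^2 \<le> 4" using s0 s2 by (metis power_mono numeral_Bit0 power2_eq_square  mult_2 numeral_One one_add_one)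
    then show ?thesis using True by simp
  next
    case False
    have "s^2 \<le> 4" using s0 s2 power_mono[of s 2 2] by simp
    hence h: "0 \<le> 1 - s^2/8" by simp
    have e: "(1 - s^2/8)^2 = 1 - s^2/4 + (s^2)^2/64" by (simp add: power2_eq_square field_simps)
    have "C^2 \<le> (1 - s^2/8)^2" using C2 unfolding e by (smt (verit) zero_le_power2 divide_nonneg_pos)
    then show ?thesis using h power2_le_imp_le by blast
  qed
  also have "\<dots> \<le> cos (s/2)" using cos_lb[of "s/2"] by (simp add: power_divide)
  finally have Ccos: "C \<le> cos (s/2)" .
  have th: "vec_angle a b = arccos C" unfolding vec_angle_def C_def ..
  have "cos (arccos C) \<le> cos (s/2)" using Ccos Cabs cos_arccos_abs by simp
  moreover have "0 \<le> arccos C" "arccos C \<le> pi" using Cabs arccos_lbound arccos_ubound by auto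
  moreover have "0 \<le> s/2" "s/2 \<le> pi" using s0 s2 pi_gt3 by auto
  ultimately have "s/2 \<le> arccos C" using cos_mono_le_eq by blast
  then show ?thesis using th unfolding s_def a_def b_def by simp
qed
definition q :: "real \<Rightarrow> real \<Rightarrow> real^3" where
  "q s t = vector [sqrt (1 - s^2 - t^2), s, t]"

lemma q2: "q s t $ 2 = s" and q3: "q s t $ 3 = t"
  unfolding q_def by simp_all

lemma q_norm: assumes "s^2 + t^2 \<le> 1" shows "norm (q s t) = 1"
proof -
  have "q s t \<bullet> q s t = 1" unfolding q_def inner_vec_def sum_3 using assms
    by (simp add: power2_eq_square[symmetric])
  then show ?thesis by (simp add: norm_eq_1)
qed

lemma q_dist2: "\<bar>s - s'\<bar> \<le> norm (q s t - q s' t')"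
  using component_le_norm_cart[of "q s t - q s' t'" 2] by (simp add: q2)
lemma q_dist3: "\<bar>t - t'\<bar> \<le> norm (q s t - q s' t')"
  using component_le_norm_cart[of "q s t - q s' t'" 3] by (simp add: q3)

lemma nat_sep: "(i::nat) \<noteq> j \<Longrightarrow> 1 \<le> \<bar>real i - real j\<bar>"
  by (cases "i < j") auto

lemma grid_sep:
  assumes h: "h > 0" and "0 \<le> a" "a \<le> h/8" "0 \<le> b" "b \<le> h/8" and ne: "(i::nat, j::nat) \<noteq> (i', j')"
  shows "h/2 \<le> norm (q (real i * h) (real j * h + a) - q (real i' * h) (real j' * h + b))"
proof (cases "i = i'")
  case True
  then have "j \<noteq> j'" using ne by simp
  then have "1 \<le> \<bar>real j - real j'\<bar>" by (rule nat_sep)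
  then have "h \<le> \<bar>real j * h - real j' * h\<bar>" using h
  proof -
    have "\<bar>real j * h - real j' * h\<bar> = \<bar>real j - real j'\<bar> * h" using h
      by (simp add: abs_mult left_diff_distrib[symmetric])
    then show ?thesis using mult_right_mono[OF \<open>1 \<le> \<bar>real j - real j'\<bar>\<close>, of h] h by simp
  qed
  then have "h/2 \<le> \<bar>(real j * h + a) - (real j' * h + b)\<bar>" using assms by linarith
  then show ?thesis using q_dist3 order_trans by blast
next
  case False
  then have "1 \<le> \<bar>real i - real i'\<bar>" by (rule nat_sep)
  then have "h \<le> \<bar>real i * h - real i' * h\<bar>" using h
  proof -
    have "\<bar>real i * h - real i' * h\<bar> = \<bar>real i - real i'\<bar> * h" using h
      by (simp add: abs_mult left_diff_distrib[symmetric])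
    then show ?thesis using mult_right_mono[OF \<open>1 \<le> \<bar>real i - real i'\<bar>\<close>, of h] h by simp
  qed
  then have "h/2 \<le> \<bar>real i * h - real i' * h\<bar>" using h by linarith
  then show ?thesis using q_dist2 order_trans by blast
qed

lemma greedy_color:
  fixes R :: "'a \<Rightarrow> 'a \<Rightarrow> bool"
  assumes fin: "finite V" and sym: "\<And>x y. R x y \<Longrightarrow> R y x" and irr: "\<And>x. \<not> R x x"
    and bnd: "\<And>x. x \<in> V \<Longrightarrow> card {y\<in>V. R x y} < N"
  shows "\<exists>col. (\<forall>x\<in>V. col x < N) \<and> (\<forall>x\<in>V. \<forall>y\<in>V. R x y \<longrightarrow> col x \<noteq> col y)"
proof -
  have "F \<subseteq> V \<longrightarrow> (\<exists>col. (\<forall>x\<in>F. col x < N) \<and> (\<forall>x\<in>F. \<forall>y\<in>F. R x y \<longrightarrow> col x \<noteq> col y))" for F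
  proof (induction F rule: infinite_finite_induct)
    case (infinite A)
    then show ?case using fin finite_subset by blast
  next
    case empty
    then show ?case by simp
  next
    case (insert x F)
    show ?case
    proof
      assume sub: "insert x F \<subseteq> V"
      then obtain col where c1: "\<forall>x\<in>F. col x < N" and c2: "\<forall>x\<in>F. \<forall>y\<in>F. R x y \<longrightarrow> col x \<noteq> col y"
        using insert by auto
      define U where "U = col ` {y\<in>F. R x y}"
      have "card U \<le> card {y\<in>F. R x y}" unfolding U_def
        using insert(1) by (simp add: card_image_le)
      also have "\<dots> \<le> card {y\<in>V. R x y}"
        using sub fin by (intro card_mono) auto
      also have "\<dots> < N" using bnd sub by auto
      finally have "card U < card {..<N}" by simp
      then have "\<not> {..<N} \<subseteq> U" using card_mono[of U "{..<N}"] insert(1) U_def by auto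
      then obtain c where c: "c < N" "c \<notin> U" by auto
      define col' where "col' = col(x := c)"
      have "\<forall>z\<in>insert x F. col' z < N" using c1 c unfolding col'_def by auto
      moreover have "\<forall>z\<in>insert x F. \<forall>y\<in>insert x F. R z y \<longrightarrow> col' z \<noteq> col' y"
      proof (intro ballI impI)
        fix z y assume z: "z \<in> insert x F" and y: "y \<in> insert x F" and r: "R z y"
        show "col' z \<noteq> col' y"
        proof (cases "z = x")
          case True
          then have "y \<noteq> x" using r irr by auto
          then have "y \<in> F" using y by auto
          then have "col y \<in> U" unfolding U_def using r True by auto
          then show ?thesis using c True \<open>y \<noteq> x\<close> unfolding col'_def by auto
        next
          case False
          then have zF: "z \<in> F" using z by auto
          show ?thesis
          proof (cases "y = x")
            case True
            then have "col z \<in> U" unfolding U_def using r sym zF by auto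
            then show ?thesis using c True False unfolding col'_def by auto
          next
            case False
            then have "y \<in> F" using y by auto
            then show ?thesis using c2 zF r \<open>z \<noteq> x\<close> False unfolding col'_def by auto
          qed
        qed
      qed
      ultimately show "\<exists>col. (\<forall>x\<in>insert x F. col x < N) \<and> (\<forall>xa\<in>insert x F. \<forall>y\<in>insert x F. R xa y \<longrightarrow> col xa \<noteq> col y)"
        by blast
    qed
  qed
  then show ?thesis by blast
qed

lemma degree_le_max: "finite V \<Longrightarrow> v \<in> V \<Longrightarrow> degree V E v \<le> max_degree V E"
  unfolding max_degree_def by (intro Max_ge) auto

theorem theorem1:
  shows "\<exists>c::real. c > 0 \<and>
    (\<forall>(V::nat set) E. simple_graph V E \<longrightarrow> max_degree V E \<ge> 1 \<longrightarrow>
       (\<exists>p :: nat \<Rightarrow> real^3. inj_on p V \<and> (\<forall>v\<in>V. norm (p v) = 1) \<and>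
          (\<forall>v u w. E v u \<longrightarrow> E v w \<longrightarrow> u \<noteq> w \<longrightarrow>
             vec_angle (p u - p v) (p w - p v) \<ge> c / real (max_degree V E))))"
proof (intro exI[of _ "1/16"] conjI allI impI)
  show "(0::real) < 1/16" by simp
  fix V :: "nat set" and E
  assume sg: "simple_graph V E" and d1: "1 \<le> max_degree V E"
  define d where "d = max_degree V E"
  have fin: "finite V" and EV: "\<And>u v. E u v \<Longrightarrow> u \<in> V \<and> v \<in> V"
    and Es: "\<And>u v. E u v \<Longrightarrow> E v u" and Ei: "\<And>v. \<not> E v v"
    using sg unfolding simple_graph_def by auto
  define K where "K = d + 1"
  define R where "R = (\<lambda>u w. u \<noteq> w \<and> (\<exists>v. E v u \<and> E v w))"
  have degb: "card {w\<in>V. E v w} \<le> d" if "v \<in> V" for v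
    using degree_le_max[OF fin that, of E] unfolding degree_def d_def .
  have bnd: "card {w\<in>V. R u w} < K * K" if u: "u \<in> V" for u
  proof -
    have "{w\<in>V. R u w} \<subseteq> (\<Union>v\<in>{v\<in>V. E u v}. {w\<in>V. E v w})"
      unfolding R_def using EV Es by blast
    then have "card {w\<in>V. R u w} \<le> card (\<Union>v\<in>{v\<in>V. E u v}. {w\<in>V. E v w})"
      using fin by (intro card_mono) auto
    also have "\<dots> \<le> (\<Sum>v\<in>{v\<in>V. E u v}. card {w\<in>V. E v w})"
      using fin by (intro card_UN_le) auto
    also have "\<dots> \<le> card {v\<in>V. E u v} * d"
      using sum_bounded_above[of "{v\<in>V. E u v}" "\<lambda>v. card {w\<in>V. E v w}" d] degb by auto
    also have "\<dots> \<le> d * d" using degb[OF u] by simp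
    also have "\<dots> < K * K" unfolding K_def by (simp add: mult_strict_mono)
    finally show ?thesis .
  qed
  obtain col where col1: "\<forall>x\<in>V. col x < K * K" and col2: "\<forall>x\<in>V. \<forall>y\<in>V. R x y \<longrightarrow> col x \<noteq> col y"
    using greedy_color[OF fin, of R "K*K"] bnd unfolding R_def by blast
  define h :: real where "h = 1 / (2 * real K)"
  have hpos: "h > 0" unfolding h_def K_def by simp
  define tau :: "nat \<Rightarrow> real" where "tau v = h / (4 * (real v + 2))" for v
  have tau0: "0 \<le> tau v" for v unfolding tau_def using hpos by simp
  have tau8: "tau v \<le> h / 8" for v
    unfolding tau_def using hpos by (intro divide_left_mono) auto
  define I where "I v = col v div K" for v
  define J where "J v = col v mod K" for v
  define p where "p v = q (real (I v) * h) (real (J v) * h + tau v)" for v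
  have Kpos: "K > 0" unfolding K_def by simp
  have IK: "I v < K" if "v \<in> V" for v
    unfolding I_def using col1 that Kpos by (simp add: less_mult_imp_div_less)
  have JK: "J v < K" for v unfolding J_def using Kpos by simp
  have sep: "h/2 \<le> norm (p u - p w)" if "(I u, J u) \<noteq> (I w, J w)" for u w
    unfolding p_def using grid_sep[OF hpos tau0 tau8 tau0 tau8 that] .
  have IJ: "(I u, J u) \<noteq> (I w, J w)" if "col u \<noteq> col w" for u w
    using that unfolding I_def J_def by (metis div_mult_mod_eq prod.inject)
  have Kh: "real K * h = 1/2" unfolding h_def using Kpos by simp
  have norm1: "norm (p v) = 1" if "v \<in> V" for v
  proof -
    have "real (I v) \<le> real K - 1" using IK[OF that] by linarith
    then have "real (I v) * h \<le> (real K - 1) * h" using hpos by (intro mult_right_mono) auto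
    then have s1: "real (I v) * h \<le> 1/2" using Kh hpos by (simp add: algebra_simps)
    have "real (J v) \<le> real K - 1" using JK[of v] by linarith
    then have "real (J v) * h \<le> (real K - 1) * h" using hpos by (intro mult_right_mono) auto
    then have t1: "real (J v) * h + tau v \<le> 1/2" using Kh hpos tau8[of v] by (simp add: algebra_simps)
    have s0: "0 \<le> real (I v) * h" and t0: "0 \<le> real (J v) * h + tau v" using hpos tau0[of v] by auto
    have "(real (I v) * h)^2 \<le> (1/2)^2" using s0 s1 by (intro power_mono) auto
    moreover have "(real (J v) * h + tau v)^2 \<le> (1/2)^2" using t0 t1 by (intro power_mono) auto
    ultimately show ?thesis unfolding p_def by (intro q_norm) (simp add: power2_eq_square)
  qed
  show "\<exists>p :: nat \<Rightarrow> real^3. inj_on p V \<and> (\<forall>v\<in>V. norm (p v) = 1) \<and>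
          (\<forall>v u w. E v u \<longrightarrow> E v w \<longrightarrow> u \<noteq> w \<longrightarrow>
             vec_angle (p u - p v) (p w - p v) \<ge> 1/16 / real (max_degree V E))"
  proof (intro exI[of _ p] conjI ballI allI impI)
    show "inj_on p V"
    proof (rule inj_onI)
      fix u w assume "u \<in> V" "w \<in> V" and eq: "p u = p w"
      have ne: "(I u, J u) = (I w, J w)"
        using sep[of u w] eq hpos by (cases "(I u, J u) = (I w, J w)") auto
      have "tau u = tau w" using arg_cong[OF eq, of "\<lambda>x. x $ 3"] ne unfolding p_def q3 by simp
      then show "u = w" unfolding tau_def using hpos by (simp add: field_simps)
    qed
    then have injp: "inj_on p V" .
    show "norm (p v) = 1" if "v \<in> V" for v using norm1 that by simp
    fix v u w assume evu: "E v u" and evw: "E v w" and uw: "u \<noteq> w"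
    have V3: "u \<in> V" "v \<in> V" "w \<in> V" using EV evu evw by auto
    have "u \<noteq> v" "w \<noteq> v" using Ei evu evw by auto
    then have puv: "p u \<noteq> p v" and pwv: "p w \<noteq> p v" using injp V3 by (auto dest: inj_onD)
    have "R u w" unfolding R_def using uw evu evw by blast
    then have "col u \<noteq> col w" using col2 V3 by blast
    then have dsep: "h/2 \<le> norm (p u - p w)" using sep IJ by blast
    have ang: "norm (p u - p w) / 2 \<le> vec_angle (p u - p v) (p w - p v)"
      using angle_lb[OF norm1 norm1 norm1 puv pwv] V3 by blast
    have dpos: "real d \<ge> 1" using d1 unfolding d_def by simp
    have "1/16 / real d \<le> h / 4"
      unfolding h_def K_def using dpos by (simp add: field_simps)
    also have "\<dots> \<le> vec_angle (p u - p v) (p w - p v)" using dsep ang by linarith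
    finally show "1/16 / real (max_degree V E) \<le> vec_angle (p u - p v) (p w - p v)"
      unfolding d_def .
  qed
qed

end
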